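(* Let $\tilde n\ge2$, $\gamma>0$, $I>0$, and let $j\ge1$ be an integer. Let $\mathbf b^*,\boldsymbol\epsilon\in\mathbb R^{\tilde n}$ and $\Delta\mathbf w\in\mathbb R^p$ be fixed, with $\|\boldsymbol\epsilon\|_\infty\le\frac29I$. Let $Q_j=\{i:|b^*_i-(j-\frac12)I|\le\frac5{18}I\}$ and assume $|Q_j|\le\frac{\gamma\tilde n}{j\log\tilde n}$. Let $\tilde{\mathbf x}_1,\dots,\tilde{\mathbf x}_{\tilde n}$ be i.i.d. $\mathcal N(0,I_p)$ and $\eta_1,\dots,\eta_{\tilde n}$ i.i.d. uniform on $[-\frac1{18},\frac1{18}]$, independent. Define $$T_{3,j}=\sum_{i\in Q_j}\mathbb I\Big[|b_i^*+\epsilon_i+\langle\tilde{\mathbf x}_i,\Delta\mathbf w\rangle|<\big(j-\tfrac12+\eta_i\big)I\Big](b_i^*+\epsilon_i)\,\tilde{\mathbf x}_i.$$ Then $\|\mathbb E[T_{3,j}]\|_2\le\frac{11\gamma\tilde n}{\log\tilde n}\|\Delta\mathbf w\|_2$.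
   Context: $\mathbb I[\cdot]$ is the indicator function; the expectation is over the $\tilde{\mathbf x}_i$ and $\eta_i$; natural logarithm. *)

theory Defs
  imports "HOL-Probability.Probability"
begin

definition std_gaussian :: "(real ^ 'p) measure" where
  "std_gaussian = density lborel
     (\<lambda>x. ennreal ((2 * pi) powr (- real CARD('p) / 2) * exp (- (norm x)\<^sup>2 / 2)))"

definition unif_eta :: "real measure" where
  "unif_eta = uniform_measure lborel {-1/18..1/18}"

definition sample_space :: "nat \<Rightarrow> (nat \<Rightarrow> (real ^ 'p) \<times> real) measure" where
  "sample_space n = PiM {..<n} (\<lambda>_. std_gaussian \<Otimes>\<^sub>M unif_eta)"

definition Qset :: "nat \<Rightarrow> (nat \<Rightarrow> real) \<Rightarrow> real \<Rightarrow> nat \<Rightarrow> nat set" where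
  "Qset n b I j = {i \<in> {..<n}. \<bar>b i - (real j - 1/2) * I\<bar> \<le> 5/18 * I}"

definition T3 :: "nat \<Rightarrow> (nat \<Rightarrow> real) \<Rightarrow> (nat \<Rightarrow> real) \<Rightarrow> real ^ 'p \<Rightarrow> real \<Rightarrow> nat
                  \<Rightarrow> (nat \<Rightarrow> (real ^ 'p) \<times> real) \<Rightarrow> real ^ 'p" where
  "T3 n b \<epsilon> dw I j \<omega> =
     (\<Sum>i\<in>Qset n b I j.
        if \<bar>b i + \<epsilon> i + fst (\<omega> i) \<bullet> dw\<bar> < (real j - 1/2 + snd (\<omega> i)) * I
        then (b i + \<epsilon> i) *\<^sub>R fst (\<omega> i) else 0)"

end

theory Submission
  imports Defs
begin


abbreviation "SN \<equiv> density lborel (\<lambda>x::real. ennreal (std_normal_density x))"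

lemma mt1: "(\<lambda>f. ennreal (\<Prod>b\<in>B. std_normal_density (f b))) \<in> borel_measurable (PiM B (\<lambda>_. lborel))" by measurable
lemma mt3: "(\<lambda>x::real^'p. ennreal ((2 * pi) powr (- real CARD('p) / 2) * exp (- (norm x)\<^sup>2 / 2))) \<in> borel_measurable borel" by measurable
lemma mt2: "(\<lambda>f. (\<Sum>b\<in>(Basis::(real^'p) set). f b *\<^sub>R b)) \<in> borel_measurable (PiM Basis (\<lambda>_. (lborel::real measure)))" by measurable

lemma gauss_prod:
  fixes B :: "'b set"
  assumes B: "finite B"
  shows "density (PiM B (\<lambda>_. lborel)) (\<lambda>f. ennreal (\<Prod>b\<in>B. std_normal_density (f b)))
     = PiM B (\<lambda>_. SN)"
proof -
  interpret SN: prob_space SN by (rule prob_space_normal_density) simp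
  interpret P: product_sigma_finite "\<lambda>_::'b. SN" by (standard; simp)
  interpret L: product_sigma_finite "\<lambda>_::'b. (lborel::real measure)" by (standard; simp)
  show ?thesis
  proof (rule P.PiM_eqI[OF B])
    show "sets (density (PiM B (\<lambda>_. lborel)) (\<lambda>f. ennreal (\<Prod>b\<in>B. std_normal_density (f b)))) = sets (PiM B (\<lambda>_. SN))"
      unfolding sets_density by (rule sets_PiM_cong) simp_all
  next
    fix A assume A: "\<And>i. i \<in> B \<Longrightarrow> A i \<in> sets SN"
    have A': "\<And>i. i \<in> B \<Longrightarrow> A i \<in> sets lborel" using A by simp
    have PA: "PiE B A \<in> sets (PiM B (\<lambda>_. lborel))"
      by (rule sets_PiM_I_finite[OF B A'])
    have "emeasure (density (PiM B (\<lambda>_. lborel)) (\<lambda>f. ennreal (\<Prod>b\<in>B. std_normal_density (f b)))) (PiE B A)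
      = (\<integral>\<^sup>+ f. ennreal (\<Prod>b\<in>B. std_normal_density (f b)) * indicator (PiE B A) f \<partial>PiM B (\<lambda>_. lborel))"
      by (rule emeasure_density[OF mt1 PA])
    also have "\<dots> = (\<integral>\<^sup>+ f. (\<Prod>b\<in>B. ennreal (std_normal_density (f b)) * indicator (A b) (f b)) \<partial>PiM B (\<lambda>_. lborel))"
    proof (rule nn_integral_cong)
      fix f :: "'b \<Rightarrow> real" assume f: "f \<in> space (PiM B (\<lambda>_. lborel))"
      then have ext: "f \<in> extensional B" by (auto simp: space_PiM PiE_def)
      have e1: "ennreal (\<Prod>b\<in>B. std_normal_density (f b)) = (\<Prod>b\<in>B. ennreal (std_normal_density (f b)))"
        by (rule prod_ennreal[symmetric]) simp
      have e2: "indicator (PiE B A) f = (\<Prod>b\<in>B. indicator (A b) (f b) :: ennreal)"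
      proof (cases "f \<in> PiE B A")
        case True
        then have "\<forall>b\<in>B. f b \<in> A b" by (simp add: PiE_iff)
        then have "(\<Prod>b\<in>B. indicator (A b) (f b) :: ennreal) = 1" by (intro prod.neutral) simp
        with True show ?thesis by simp
      next
        case False
        then obtain b where "b \<in> B" "f b \<notin> A b" using ext by (auto simp: PiE_iff)
        then have "(\<Prod>b\<in>B. indicator (A b) (f b) :: ennreal) = 0"
          using \<open>b \<in> B\<close> \<open>f b \<notin> A b\<close> by (intro prod_zero[OF B] bexI[of _ b]) auto
        with False show ?thesis by simp
      qed
      show "ennreal (\<Prod>b\<in>B. std_normal_density (f b)) * indicator (PiE B A) f = (\<Prod>b\<in>B. ennreal (std_normal_density (f b)) * indicator (A b) (f b))"
        unfolding e1 e2 prod.distrib ..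
    qed
    also have "\<dots> = (\<Prod>b\<in>B. \<integral>\<^sup>+ x. ennreal (std_normal_density x) * indicator (A b) x \<partial>lborel)"
    proof (rule L.product_nn_integral_prod[OF B])
      fix i assume "i \<in> B"
      then have [measurable]: "A i \<in> sets borel" using A' by simp
      show "(\<lambda>x. ennreal (std_normal_density x) * indicator (A i) x) \<in> borel_measurable lborel" by measurable
    qed
    also have "\<dots> = (\<Prod>b\<in>B. emeasure SN (A b))"
    proof (intro prod.cong refl)
      fix b assume "b \<in> B"
      then have "A b \<in> sets lborel" using A' by simp
      then show "(\<integral>\<^sup>+ x. ennreal (std_normal_density x) * indicator (A b) x \<partial>lborel) = emeasure SN (A b)"
        by (intro emeasure_density[symmetric]) simp_all
    qed
    finally show "emeasure (density (PiM B (\<lambda>_. lborel)) (\<lambda>f. ennreal (\<Prod>b\<in>B. std_normal_density (f b)))) (PiE B A) = (\<Prod>b\<in>B. emeasure SN (A b))" .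
  qed
qed

lemma const_eq: "(2 * pi) powr (- real n / 2) = (1 / sqrt (2 * pi)) ^ n"
proof -
  have "(1 / sqrt (2 * pi)) ^ n = 1 / ((2*pi) powr (1/2)) ^ n"
    by (simp add: powr_half_sqrt power_one_over)
  also have "((2*pi) powr (1/2)) ^ n = (2*pi) powr (real n * (1/2))" by (rule powr_power) simp
  also have "1 / (2*pi) powr (real n * (1/2)) = (2*pi) powr (- real n / 2)"
    by (simp add: powr_minus_divide)
  finally show ?thesis by simp
qed

lemma phi_inner:
  fixes f :: "'a::euclidean_space \<Rightarrow> real"
  assumes "b \<in> Basis"
  shows "(\<Sum>c\<in>Basis. f c *\<^sub>R c) \<bullet> b = f b"
  using assms by (simp add: inner_sum_left inner_Basis if_distrib cong: if_cong)

lemma norm_sq_basis: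
  fixes x :: "'a::euclidean_space"
  shows "(norm x)\<^sup>2 = (\<Sum>b\<in>Basis. (x \<bullet> b)\<^sup>2)"
  by (simp only: power2_norm_eq_inner, subst euclidean_inner, simp add: power2_eq_square)

lemma std_gaussian_eq:
  "(std_gaussian :: (real^'p) measure) = distr (PiM Basis (\<lambda>_. SN)) borel (\<lambda>f. \<Sum>b\<in>Basis. f b *\<^sub>R b)"
proof -
  let ?P = "PiM (Basis :: (real^'p) set) (\<lambda>_. (lborel::real measure))"
  let ?phi = "\<lambda>f. \<Sum>b\<in>(Basis :: (real^'p) set). f b *\<^sub>R b"
  let ?G = "\<lambda>x::real^'p. ennreal ((2 * pi) powr (- real CARD('p) / 2) * exp (- (norm x)\<^sup>2 / 2))"
  have L: "(lborel :: (real^'p) measure) = distr ?P borel ?phi" by (rule lborel_eq)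
  have "std_gaussian = density (distr ?P borel ?phi) ?G" unfolding std_gaussian_def by (simp only: L)
  also have "density (distr ?P borel ?phi) ?G = distr (density ?P (\<lambda>f. ?G (?phi f))) borel ?phi"
    by (rule density_distr[OF mt3 mt2])
  also have "density ?P (\<lambda>f. ?G (?phi f)) = density ?P (\<lambda>f. ennreal (\<Prod>b\<in>Basis. std_normal_density (f b)))"
  proof (rule density_cong)
    show "AE f in ?P. ?G (?phi f) = ennreal (\<Prod>b\<in>Basis. std_normal_density (f b))"
    proof (rule AE_I2)
      fix f
      have "(norm (?phi f))\<^sup>2 = (\<Sum>b\<in>Basis. (f b)\<^sup>2)"
        by (simp add: norm_sq_basis phi_inner cong: sum.cong)
      moreover have "(\<Prod>b\<in>(Basis::(real^'p) set). std_normal_density (f b))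
         = (1 / sqrt (2 * pi)) ^ CARD('p) * exp (- (\<Sum>b\<in>Basis. (f b)\<^sup>2) / 2)"
      proof -
        have "(\<Prod>b\<in>(Basis::(real^'p) set). std_normal_density (f b))
           = (\<Prod>b\<in>(Basis::(real^'p) set). (1 / sqrt (2 * pi)) * exp (- (f b)\<^sup>2 / 2))"
          by (simp add: std_normal_density_def)
        also have "\<dots> = (1 / sqrt (2 * pi)) ^ CARD('p) * (\<Prod>b\<in>(Basis::(real^'p) set). exp (- (f b)\<^sup>2 / 2))"
          unfolding prod.distrib prod_constant by simp
        also have "(\<Prod>b\<in>(Basis::(real^'p) set). exp (- (f b)\<^sup>2 / 2)) = exp (\<Sum>b\<in>Basis. - (f b)\<^sup>2 / 2)"
          by (simp add: exp_sum)
        also have "(\<Sum>b\<in>(Basis::(real^'p) set). - (f b)\<^sup>2 / 2) = - (\<Sum>b\<in>Basis. (f b)\<^sup>2) / 2"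
          by (simp add: sum_negf sum_divide_distrib)
        finally show ?thesis .
      qed
      moreover have "(2 * pi) powr (- real CARD('p) / 2) = (1 / sqrt (2 * pi)) ^ CARD('p)"
        by (rule const_eq)
      ultimately show "?G (?phi f) = ennreal (\<Prod>b\<in>Basis. std_normal_density (f b))"
        by simp
    qed
  qed (rule measurable_compose[OF mt2 mt3], rule mt1)
  also have "\<dots> = PiM Basis (\<lambda>_. SN)" by (rule gauss_prod) simp
  finally show ?thesis .
qed

lemma SN_prob: "prob_space SN"
  by (rule prob_space_normal_density) simp

lemma sets_SN[simp, measurable_cong]: "sets SN = sets borel" by simp

lemma comp_distr:
  assumes "b \<in> B"
  shows "distr (PiM B (\<lambda>_. SN)) SN (\<lambda>f. f b) = SN"
  by (rule distr_PiM_component[OF SN_prob assms])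

lemma comp_integrable:
  fixes g :: "real \<Rightarrow> real"
  assumes b: "b \<in> B" and g: "integrable SN g" and gm[measurable]: "g \<in> borel_measurable borel"
  shows "integrable (PiM B (\<lambda>_. SN)) (\<lambda>f. g (f b))"
proof -
  have "integrable (distr (PiM B (\<lambda>_. SN)) SN (\<lambda>f. f b)) g" using g comp_distr[OF b] by simp
  then show ?thesis
    by (subst (asm) integrable_distr_eq) (use b in auto)
qed

lemma comp_integral:
  fixes g :: "real \<Rightarrow> real"
  assumes b: "b \<in> B" and gm[measurable]: "g \<in> borel_measurable borel"
  shows "integral\<^sup>L (PiM B (\<lambda>_. SN)) (\<lambda>f. g (f b)) = integral\<^sup>L SN g"
proof -
  have "integral\<^sup>L SN g = integral\<^sup>L (distr (PiM B (\<lambda>_. SN)) SN (\<lambda>f. f b)) g" using comp_distr[OF b] by simp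
  also have "\<dots> = integral\<^sup>L (PiM B (\<lambda>_. SN)) (\<lambda>f. g (f b))"
    by (rule integral_distr) (use b in auto)
  finally show ?thesis by simp
qed

lemma SN_sq_int: "integrable SN (\<lambda>x. x^2)"
  by (subst integrable_density) (auto intro: integrable_std_normal_moment[of 2])

lemma SN_sq: "integral\<^sup>L SN (\<lambda>x. x^2) = 1"
proof -
  have "integral\<^sup>L SN (\<lambda>x. x^2) = integral\<^sup>L lborel (\<lambda>x. std_normal_density x * x^(2*1))"
    by (subst integral_density) auto
  also have "\<dots> = 1" by (subst integral_std_normal_moment_even) simp
  finally show ?thesis .
qed

lemma SN_abs_int: "integrable SN (\<lambda>x. \<bar>x\<bar>)"
  using integrable_std_normal_moment_abs[of 1]
  by (subst integrable_density) auto

lemma SN_sym: "distr SN borel uminus = SN"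
proof -
  have "density (distr lborel borel uminus) (\<lambda>x. ennreal (std_normal_density x))
      = distr (density lborel (\<lambda>x. ennreal (std_normal_density (- x)))) borel uminus"
    using density_distr[of "\<lambda>x. ennreal (std_normal_density x)" borel "uminus::real\<Rightarrow>real" lborel] by simp
  then show ?thesis
    by (simp add: lborel_distr_uminus std_normal_density_def)
qed

definition flip :: "'b set \<Rightarrow> 'b \<Rightarrow> ('b \<Rightarrow> real) \<Rightarrow> ('b \<Rightarrow> real)" where
  "flip B b f = (\<lambda>i\<in>B. if i = b then - f i else f i)"

lemma flip_measurable[measurable]: "flip B b \<in> measurable (PiM B (\<lambda>_. SN)) (PiM B (\<lambda>_. SN))"
  unfolding flip_def by (rule measurable_restrict) measurable

lemma flip_PiM:
  assumes B: "finite B" and b: "b \<in> B"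
  shows "distr (PiM B (\<lambda>_. SN)) (PiM B (\<lambda>_. SN)) (flip B b) = PiM B (\<lambda>_. SN)"
proof -
  interpret SN: prob_space SN by (rule SN_prob)
  interpret P: product_sigma_finite "\<lambda>_::'b. SN" by (standard; simp)
  show ?thesis
  proof (rule P.PiM_eqI[OF B])
    show "sets (distr (PiM B (\<lambda>_. SN)) (PiM B (\<lambda>_. SN)) (flip B b)) = sets (PiM B (\<lambda>_. SN))" by simp
  next
    fix A assume A: "\<And>i. i \<in> B \<Longrightarrow> A i \<in> sets SN"
    define A' where "A' i = (if i = b then uminus -` A i else A i)" for i
    have um: "uminus -` A b \<in> sets borel"
      using measurable_sets[of "uminus::real\<Rightarrow>real" borel borel "A b"] A[OF b] by simp
    have A': "\<And>i. i \<in> B \<Longrightarrow> A' i \<in> sets SN" using A um by (simp add: A'_def)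
    have PA: "PiE B A \<in> sets (PiM B (\<lambda>_. SN))" by (rule sets_PiM_I_finite[OF B A])
    have pre: "flip B b -` PiE B A \<inter> space (PiM B (\<lambda>_. SN)) = PiE B A'"
    proof (intro set_eqI iffI)
      fix f assume "f \<in> flip B b -` PiE B A \<inter> space (PiM B (\<lambda>_. SN))"
      then have f1: "flip B b f \<in> PiE B A" and f2: "f \<in> space (PiM B (\<lambda>_. SN))" by auto
      from f2 have e: "f \<in> extensional B" by (simp add: space_PiM PiE_def)
      from f1 have h: "\<forall>i\<in>B. (if i = b then - f i else f i) \<in> A i"
        unfolding flip_def by (simp only: restrict_PiE_iff)
      have "\<forall>i\<in>B. f i \<in> A' i"
      proof
        fix i assume iB: "i \<in> B"
        then have "(if i = b then - f i else f i) \<in> A i" using h by blast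
        then show "f i \<in> A' i" by (cases "i = b") (simp_all add: A'_def)
      qed
      with e show "f \<in> PiE B A'" by (simp add: PiE_def Pi_def)
    next
      fix f assume "f \<in> PiE B A'"
      then have e: "f \<in> extensional B" and h: "\<forall>i\<in>B. f i \<in> A' i" by (simp_all add: PiE_def Pi_def)
      have "\<forall>i\<in>B. (if i = b then - f i else f i) \<in> A i"
      proof
        fix i assume iB: "i \<in> B"
        then have "f i \<in> A' i" using h by blast
        then show "(if i = b then - f i else f i) \<in> A i" by (cases "i = b") (simp_all add: A'_def)
      qed
      then have "flip B b f \<in> PiE B A" unfolding flip_def by (simp add: restrict_PiE_iff)
      moreover have "f \<in> space (PiM B (\<lambda>_. SN))" using e by (simp add: space_PiM PiE_def)
      ultimately show "f \<in> flip B b -` PiE B A \<inter> space (PiM B (\<lambda>_. SN))" by simp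
    qed
    have "emeasure (distr (PiM B (\<lambda>_. SN)) (PiM B (\<lambda>_. SN)) (flip B b)) (PiE B A)
        = emeasure (PiM B (\<lambda>_. SN)) (PiE B A')"
      by (subst emeasure_distr[OF flip_measurable PA]) (simp add: pre)
    also have "\<dots> = (\<Prod>i\<in>B. emeasure SN (A' i))" by (rule P.emeasure_PiM[OF B A'])
    also have "\<dots> = (\<Prod>i\<in>B. emeasure SN (A i))"
    proof (intro prod.cong refl)
      fix i assume "i \<in> B"
      show "emeasure SN (A' i) = emeasure SN (A i)"
      proof (cases "i = b")
        case True
        have "emeasure SN (A i) = emeasure (distr SN borel uminus) (A i)" by (simp add: SN_sym)
        also have "\<dots> = emeasure SN (uminus -` A i \<inter> space SN)"
          by (rule emeasure_distr) (use A \<open>i \<in> B\<close> in auto)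
        finally show ?thesis using True by (simp add: A'_def)
      qed (simp add: A'_def)
    qed
    finally show "emeasure (distr (PiM B (\<lambda>_. SN)) (PiM B (\<lambda>_. SN)) (flip B b)) (PiE B A) = (\<Prod>i\<in>B. emeasure SN (A i))" .
  qed
qed

lemma U_prob: "prob_space unif_eta"
  unfolding unif_eta_def by (rule prob_space_uniform_measure) (simp_all add: emeasure_lborel_Icc_eq)

lemma sets_U[simp, measurable_cong]: "sets unif_eta = sets borel"
  by (simp add: unif_eta_def)

definition Hf :: "real \<Rightarrow> real" where "Hf t = measure unif_eta {\<eta>. t < \<eta>}"

lemma Hf_diff:
  assumes le: "t1 \<le> t2"
  shows "Hf t2 \<le> Hf t1" "Hf t1 - Hf t2 \<le> 9 * (t2 - t1)"
proof -
  interpret U: prob_space unif_eta by (rule U_prob)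
  show "Hf t2 \<le> Hf t1" unfolding Hf_def
    by (rule U.finite_measure_mono) (use le in auto)
  have "Hf t1 - Hf t2 = measure unif_eta ({t1<..} - {t2<..})"
    unfolding Hf_def by (subst U.finite_measure_Diff) (use le in \<open>auto simp: greaterThan_def\<close>)
  also have "{t1<..} - {t2<..} = {t1<..t2}" by auto
  also have "measure unif_eta {t1<..t2} = measure lborel ({-1/18..1/18} \<inter> {t1<..t2}) / measure lborel {-1/18..1/18::real}"
    unfolding unif_eta_def by (rule measure_uniform_measure) (simp_all add: emeasure_lborel_Icc_eq)
  also have "\<dots> = 9 * measure lborel ({-1/18..1/18} \<inter> {t1<..t2})" by simp
  also have "measure lborel ({-1/18..1/18} \<inter> {t1<..t2}) \<le> measure lborel {t1<..t2}"
    by (rule measure_mono_fmeasurable) (use le in \<open>auto simp: fmeasurable_def emeasure_lborel_Ioc\<close>)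
  finally show "Hf t1 - Hf t2 \<le> 9 * (t2 - t1)" using le by simp
qed

lemma Hf_lip: "\<bar>Hf s - Hf t\<bar> \<le> 9 * \<bar>s - t\<bar>"
proof (cases "s \<le> t")
  case True then show ?thesis using Hf_diff[OF True] by simp
next
  case False then have "t \<le> s" by simp
  then show ?thesis using Hf_diff[OF \<open>t \<le> s\<close>] by simp
qed

lemma Hf_meas[measurable]: "Hf \<in> borel_measurable borel"
proof -
  have "9-lipschitz_on UNIV Hf"
    by (rule lipschitz_onI) (auto simp: dist_real_def Hf_lip)
  then have "continuous_on UNIV Hf" by (rule lipschitz_on_continuous_on)
  then show ?thesis by (rule borel_measurable_continuous_onI)
qed

lemma Hf_bounds: "0 \<le> Hf t" "Hf t \<le> 1"
proof -
  interpret U: prob_space unif_eta by (rule U_prob)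
  show "0 \<le> Hf t" "Hf t \<le> 1" unfolding Hf_def by auto
qed



abbreviation phi :: "((real^'p) \<Rightarrow> real) \<Rightarrow> real^'p" where
  "phi f \<equiv> (\<Sum>b\<in>Basis. f b *\<^sub>R b)"

lemma phi_meas[measurable]: "phi \<in> borel_measurable (PiM (Basis::(real^'p) set) (\<lambda>_. SN))"
  by measurable

lemma comp_meas:
  assumes b: "b \<in> B"
  shows "(\<lambda>f. f b) \<in> borel_measurable (PiM B (\<lambda>_. SN))"
  using measurable_component_singleton[OF b, of "\<lambda>_. SN"] measurable_cong_sets[OF refl sets_SN, of "PiM B (\<lambda>_. SN)"]
  by simp

lemma phi_flip:
  assumes b: "(b::real^'p) \<in> Basis"
  shows "phi (flip Basis b f) = phi f - (f b *\<^sub>R b + f b *\<^sub>R b)"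
proof -
  have "phi (flip Basis b f) = (\<Sum>c\<in>Basis. f c *\<^sub>R c - (if c = b then f b *\<^sub>R b + f b *\<^sub>R b else 0))"
  proof (intro sum.cong refl)
    fix c :: "real^'p" assume c: "c \<in> Basis"
    show "flip Basis b f c *\<^sub>R c = f c *\<^sub>R c - (if c = b then f b *\<^sub>R b + f b *\<^sub>R b else 0)"
    proof (cases "c = b")
      case True
      then show ?thesis using c by (simp add: flip_def)
    next
      case False then show ?thesis using c by (simp add: flip_def)
    qed
  qed
  also have "\<dots> = phi f - (\<Sum>c\<in>Basis. (if c = b then f b *\<^sub>R b + f b *\<^sub>R b else 0))"
    by (simp add: sum_subtractf)
  also have "(\<Sum>c\<in>Basis. (if c = b then f b *\<^sub>R b + f b *\<^sub>R b else 0)) = f b *\<^sub>R b + f b *\<^sub>R b"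
    using b by (simp add: sum.delta)
  finally show ?thesis .
qed

lemma refl_bound:
  fixes w :: "real^'p" and c I a :: real and b :: "real^'p"
  assumes I: "I > 0" and b: "b \<in> Basis"
  shows "\<bar>integral\<^sup>L (PiM Basis (\<lambda>_. SN)) (\<lambda>f. Hf (\<bar>c + phi f \<bullet> w\<bar> / I - a) * (c * f b))\<bar>
          \<le> 9 * \<bar>c\<bar> / I * \<bar>w \<bullet> b\<bar>"
proof -
  define F where "F s = Hf (\<bar>c + s\<bar> / I - a)" for s
  define Z where "Z = PiM (Basis::(real^'p) set) (\<lambda>_. SN)"
  define k where "k f = F (phi f \<bullet> w) * (c * f b)" for f
  have Flip: "\<bar>F x - F y\<bar> \<le> 9 / I * \<bar>x - y\<bar>" for x y
  proof -
    have "\<bar>(\<bar>c + x\<bar> / I - a) - (\<bar>c + y\<bar> / I - a)\<bar> = \<bar>\<bar>c + x\<bar> - \<bar>c + y\<bar>\<bar> / I"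
      using I by (simp add: diff_divide_distrib[symmetric])
    also have "\<dots> \<le> \<bar>x - y\<bar> / I"
      using I abs_triangle_ineq3[of "c + x" "c + y"] by (simp add: divide_right_mono)
    finally have "\<bar>(\<bar>c + x\<bar> / I - a) - (\<bar>c + y\<bar> / I - a)\<bar> \<le> \<bar>x - y\<bar> / I" .
    then have "9 * \<bar>(\<bar>c + x\<bar> / I - a) - (\<bar>c + y\<bar> / I - a)\<bar> \<le> 9 / I * \<bar>x - y\<bar>" by simp
    with Hf_lip[of "\<bar>c + x\<bar> / I - a" "\<bar>c + y\<bar> / I - a"] show ?thesis
      unfolding F_def by linarith
  qed
  have Fb: "0 \<le> F x" "F x \<le> 1" for x unfolding F_def by (rule Hf_bounds)+
  have Fm[measurable]: "F \<in> borel_measurable borel" unfolding F_def by measurable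
  have bm[measurable]: "(\<lambda>f. f b) \<in> borel_measurable Z" unfolding Z_def by (rule comp_meas[OF b])
  have pm[measurable]: "phi \<in> borel_measurable Z" unfolding Z_def by (rule phi_meas)
  have km[measurable]: "k \<in> borel_measurable Z" unfolding k_def by measurable
  have ia: "integrable Z (\<lambda>f. \<bar>f b\<bar>)" unfolding Z_def by (rule comp_integrable[OF b SN_abs_int]) simp
  have isq: "integrable Z (\<lambda>f. (f b)^2)" unfolding Z_def by (rule comp_integrable[OF b SN_sq_int]) simp
  have isq1: "integral\<^sup>L Z (\<lambda>f. (f b)^2) = 1" unfolding Z_def by (subst comp_integral[OF b]) (simp_all add: SN_sq)
  have ik: "integrable Z k"
  proof (rule Bochner_Integration.integrable_bound[OF integrable_mult_right[OF ia, of "\<bar>c\<bar>"] km])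
    show "AE x in Z. norm (k x) \<le> norm (\<bar>c\<bar> * \<bar>x b\<bar>)"
    proof (rule AE_I2)
      fix x
      have "\<bar>F (phi x \<bullet> w)\<bar> * \<bar>c * x b\<bar> \<le> 1 * \<bar>c * x b\<bar>"
        using Fb[of "phi x \<bullet> w"] by (intro mult_right_mono) auto
      then show "norm (k x) \<le> norm (\<bar>c\<bar> * \<bar>x b\<bar>)" by (simp add: k_def abs_mult)
    qed
  qed
  have fm: "flip Basis b \<in> measurable Z Z" unfolding Z_def by (rule flip_measurable)
  have D: "distr Z Z (flip Basis b) = Z" unfolding Z_def by (rule flip_PiM[OF _ b]) simp
  have eq1: "integral\<^sup>L Z k = integral\<^sup>L Z (\<lambda>f. k (flip Basis b f))"
  proof -
    have "integral\<^sup>L Z k = integral\<^sup>L (distr Z Z (flip Basis b)) k" by (simp add: D)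
    also have "\<dots> = integral\<^sup>L Z (\<lambda>f. k (flip Basis b f))" by (rule integral_distr[OF fm km])
    finally show ?thesis .
  qed
  have ik2: "integrable Z (\<lambda>f. k (flip Basis b f))"
    using ik by (subst (asm) D[symmetric]) (simp add: integrable_distr_eq[OF fm km])
  have pflip: "phi (flip Basis b f) \<bullet> w = phi f \<bullet> w - 2 * f b * (w \<bullet> b)" for f
  proof -
    have "phi (flip Basis b f) \<bullet> w = phi f \<bullet> w - (f b * (b \<bullet> w) + f b * (b \<bullet> w))"
      unfolding phi_flip[OF b] by (simp only: inner_diff_left inner_add_left inner_scaleR_left)
    then show ?thesis by (simp add: inner_commute[of b w])
  qed
  have kflip: "k (flip Basis b f) = F (phi f \<bullet> w - 2 * f b * (w \<bullet> b)) * (c * (- f b))" for f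
  proof -
    have "flip Basis b f b = - f b" using b by (simp add: flip_def)
    then show ?thesis by (simp add: k_def pflip)
  qed
  have pt: "\<bar>k f + k (flip Basis b f)\<bar> \<le> 18 * \<bar>c\<bar> * \<bar>w \<bullet> b\<bar> / I * (f b)^2" for f
  proof -
    have "k f + k (flip Basis b f) = c * f b * (F (phi f \<bullet> w) - F (phi f \<bullet> w - 2 * f b * (w \<bullet> b)))"
      unfolding kflip by (simp add: k_def algebra_simps)
    also have "\<bar>\<dots>\<bar> = \<bar>c * f b\<bar> * \<bar>F (phi f \<bullet> w) - F (phi f \<bullet> w - 2 * f b * (w \<bullet> b))\<bar>"
      by (simp add: abs_mult)
    also have "\<dots> \<le> \<bar>c * f b\<bar> * (9 / I * \<bar>2 * f b * (w \<bullet> b)\<bar>)"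
      using Flip[of "phi f \<bullet> w" "phi f \<bullet> w - 2 * f b * (w \<bullet> b)"] by (intro mult_left_mono) auto
    also have "\<dots> = 18 * \<bar>c\<bar> * \<bar>w \<bullet> b\<bar> / I * (f b)^2"
      by (simp add: abs_mult power2_eq_square)
    finally show ?thesis .
  qed
  have "2 * integral\<^sup>L Z k = integral\<^sup>L Z (\<lambda>f. k f + k (flip Basis b f))"
    using eq1 ik ik2 by simp
  also have "\<bar>\<dots>\<bar> \<le> integral\<^sup>L Z (\<lambda>f. \<bar>k f + k (flip Basis b f)\<bar>)"
    using integral_norm_bound[of Z "\<lambda>f. k f + k (flip Basis b f)"] by simp
  also have "\<dots> \<le> integral\<^sup>L Z (\<lambda>f. 18 * \<bar>c\<bar> * \<bar>w \<bullet> b\<bar> / I * (f b)^2)"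
    by (rule integral_mono) (use ik ik2 isq pt in auto)
  also have "\<dots> = 18 * \<bar>c\<bar> * \<bar>w \<bullet> b\<bar> / I" using isq1 by simp
  finally have "\<bar>integral\<^sup>L Z k\<bar> \<le> 9 * \<bar>c\<bar> / I * \<bar>w \<bullet> b\<bar>" by simp
  then show ?thesis unfolding k_def F_def Z_def .
qed



lemma Z_prob: "prob_space (PiM (Basis::(real^'p) set) (\<lambda>_. SN))"
  by (rule prob_space_PiM) (rule SN_prob)

lemma G_prob: "prob_space (std_gaussian :: (real^'p) measure)"
proof -
  interpret Z: prob_space "PiM (Basis::(real^'p) set) (\<lambda>_. SN)" by (rule Z_prob)
  show ?thesis unfolding std_gaussian_eq by (rule Z.prob_space_distr) (rule phi_meas)
qed

lemma sets_G[simp, measurable_cong]: "sets (std_gaussian :: (real^'p) measure) = sets borel"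
  by (simp add: std_gaussian_def)

lemma G_norm_int: "integrable (std_gaussian :: (real^'p) measure) norm"
proof -
  have i1: "integrable (PiM (Basis::(real^'p) set) (\<lambda>_. SN)) (\<lambda>f. \<Sum>b\<in>Basis. \<bar>f b\<bar>)"
    by (rule Bochner_Integration.integrable_sum, rule comp_integrable[OF _ SN_abs_int]) auto
  have "integrable (PiM (Basis::(real^'p) set) (\<lambda>_. SN)) (\<lambda>f. norm (phi f))"
  proof (rule Bochner_Integration.integrable_bound[OF i1])
    show "(\<lambda>f. norm (phi f)) \<in> borel_measurable (PiM (Basis::(real^'p) set) (\<lambda>_. SN))" by measurable
    show "AE x in PiM (Basis::(real^'p) set) (\<lambda>_. SN). norm (norm (phi x)) \<le> norm (\<Sum>b\<in>Basis. \<bar>x b\<bar>)"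
    proof (rule AE_I2)
      fix x :: "real^'p \<Rightarrow> real"
      have "norm (phi x) \<le> (\<Sum>b\<in>Basis. norm (x b *\<^sub>R b))" by (rule norm_sum)
      also have "\<dots> = (\<Sum>b\<in>Basis. \<bar>x b\<bar>)" by (intro sum.cong refl) simp
      finally show "norm (norm (phi x)) \<le> norm (\<Sum>b\<in>Basis. \<bar>x b\<bar>)" by simp
    qed
  qed
  then show ?thesis unfolding std_gaussian_eq
    by (subst integrable_distr_eq) (auto intro: phi_meas)
qed

definition hh :: "real \<Rightarrow> real^'p \<Rightarrow> real \<Rightarrow> real \<Rightarrow> (real^'p) \<times> real \<Rightarrow> real^'p" where
  "hh c w a I z = (if \<bar>c + fst z \<bullet> w\<bar> < (a + snd z) * I then c *\<^sub>R fst z else 0)"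

lemma hh_meas[measurable]:
  fixes w :: "real^'p"
  shows "hh c w a I \<in> borel_measurable (std_gaussian \<Otimes>\<^sub>M unif_eta)"
  unfolding hh_def by measurable

lemma hh_int:
  fixes w :: "real^'p"
  shows "integrable (std_gaussian \<Otimes>\<^sub>M unif_eta) (hh c w a I)"
proof -
  interpret U: prob_space unif_eta by (rule U_prob)
  have "integrable (distr ((std_gaussian :: (real^'p) measure) \<Otimes>\<^sub>M unif_eta) std_gaussian fst) norm"
    by (simp add: U.distr_pair_fst G_norm_int)
  then have "integrable ((std_gaussian :: (real^'p) measure) \<Otimes>\<^sub>M unif_eta) (\<lambda>z. norm (fst z :: real^'p))"
    by (subst (asm) integrable_distr_eq) auto
  then have i1: "integrable ((std_gaussian :: (real^'p) measure) \<Otimes>\<^sub>M unif_eta) (\<lambda>z. \<bar>c\<bar> * norm (fst z :: real^'p))" by simp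
  show ?thesis
  proof (rule Bochner_Integration.integrable_bound[OF i1 hh_meas])
    show "AE x in std_gaussian \<Otimes>\<^sub>M unif_eta. norm (hh c w a I x) \<le> norm (\<bar>c\<bar> * norm (fst x))"
      by (rule AE_I2) (simp add: hh_def)
  qed
qed

lemma hh_bound:
  fixes w :: "real^'p" and c a I :: real
  assumes I: "I > 0"
  shows "norm (integral\<^sup>L ((std_gaussian :: (real^'p) measure) \<Otimes>\<^sub>M unif_eta) (hh c w a I)) \<le> 9 * \<bar>c\<bar> / I * norm w"
proof -
  interpret G: prob_space "std_gaussian :: (real^'p) measure" by (rule G_prob)
  interpret U: prob_space unif_eta by (rule U_prob)
  interpret GU: pair_prob_space "std_gaussian :: (real^'p) measure" unif_eta by standard
  define v where "v = integral\<^sup>L ((std_gaussian :: (real^'p) measure) \<Otimes>\<^sub>M unif_eta) (hh c w a I)"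
  have comp: "\<bar>v \<bullet> b\<bar> \<le> 9 * \<bar>c\<bar> / I * \<bar>w \<bullet> b\<bar>" if b: "b \<in> Basis" for b
  proof -
    have "v \<bullet> b = integral\<^sup>L ((std_gaussian :: (real^'p) measure) \<Otimes>\<^sub>M unif_eta) (\<lambda>z. hh c w a I z \<bullet> b)"
      unfolding v_def by (rule integral_inner_left[symmetric]) (rule hh_int)
    also have "\<dots> = integral\<^sup>L (std_gaussian :: (real^'p) measure) (\<lambda>x. integral\<^sup>L unif_eta (\<lambda>\<eta>. hh c w a I (x, \<eta>) \<bullet> b))"
      by (rule GU.integral_fst'[symmetric]) (rule integrable_inner_left, rule hh_int)
    also have "\<dots> = integral\<^sup>L (std_gaussian :: (real^'p) measure) (\<lambda>x. Hf (\<bar>c + x \<bullet> w\<bar> / I - a) * (c * (x \<bullet> b)))"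
    proof (rule Bochner_Integration.integral_cong[OF refl])
      fix x :: "real^'p"
      have iff: "(\<bar>c + x \<bullet> w\<bar> < (a + \<eta>) * I) = (\<bar>c + x \<bullet> w\<bar> / I - a < \<eta>)" for \<eta>
        using I by (simp add: field_simps)
      have "(\<lambda>\<eta>. hh c w a I (x, \<eta>) \<bullet> b) = (\<lambda>\<eta>. indicator {\<eta>. \<bar>c + x \<bullet> w\<bar> / I - a < \<eta>} \<eta> * (c * (x \<bullet> b)))"
        by (rule ext) (simp add: hh_def iff indicator_def)
      then show "integral\<^sup>L unif_eta (\<lambda>\<eta>. hh c w a I (x, \<eta>) \<bullet> b) = Hf (\<bar>c + x \<bullet> w\<bar> / I - a) * (c * (x \<bullet> b))"
        by (simp add: Hf_def unif_eta_def)
    qed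
    also have "\<dots> = integral\<^sup>L (PiM (Basis::(real^'p) set) (\<lambda>_. SN)) (\<lambda>f. Hf (\<bar>c + phi f \<bullet> w\<bar> / I - a) * (c * (phi f \<bullet> b)))"
      unfolding std_gaussian_eq by (rule integral_distr) (auto intro: phi_meas)
    also have "\<dots> = integral\<^sup>L (PiM (Basis::(real^'p) set) (\<lambda>_. SN)) (\<lambda>f. Hf (\<bar>c + phi f \<bullet> w\<bar> / I - a) * (c * f b))"
      using b by (simp add: phi_inner)
    finally show ?thesis using refl_bound[OF I b, of c w a] by simp
  qed
  have "(norm v)\<^sup>2 = (\<Sum>b\<in>Basis. (v \<bullet> b)\<^sup>2)" by (rule norm_sq_basis)
  also have "\<dots> \<le> (\<Sum>b\<in>Basis. (9 * \<bar>c\<bar> / I * \<bar>w \<bullet> b\<bar>)\<^sup>2)"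
  proof (rule sum_mono)
    fix b :: "real^'p" assume b: "b \<in> Basis"
    have "\<bar>v \<bullet> b\<bar>\<^sup>2 \<le> (9 * \<bar>c\<bar> / I * \<bar>w \<bullet> b\<bar>)\<^sup>2"
      by (rule power_mono[OF comp[OF b]]) simp
    then show "(v \<bullet> b)\<^sup>2 \<le> (9 * \<bar>c\<bar> / I * \<bar>w \<bullet> b\<bar>)\<^sup>2" by simp
  qed
  also have "\<dots> = (9 * \<bar>c\<bar> / I)\<^sup>2 * (\<Sum>b\<in>Basis. (w \<bullet> b)\<^sup>2)"
    unfolding sum_distrib_left by (intro sum.cong refl) (simp only: power_mult_distrib power2_abs)
  also have "\<dots> = (9 * \<bar>c\<bar> / I * norm w)\<^sup>2"
    by (simp only: norm_sq_basis[of w, symmetric] power_mult_distrib)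
  finally have "(norm v)\<^sup>2 \<le> (9 * \<bar>c\<bar> / I * norm w)\<^sup>2" .
  then have "norm v \<le> 9 * \<bar>c\<bar> / I * norm w"
    by (rule power2_le_imp_le) (use I in simp)
  then show ?thesis by (simp add: v_def)
qed

theorem mainTheorem10:
  fixes n :: nat and \<gamma> I :: real and j :: nat
    and b \<epsilon> :: "nat \<Rightarrow> real" and dw :: "real ^ 'p"
  assumes "n \<ge> 2" and "\<gamma> > 0" and "I > 0" and "j \<ge> 1"
    and "\<forall>i<n. \<bar>\<epsilon> i\<bar> \<le> 2/9 * I"
    and "real (card (Qset n b I j)) \<le> \<gamma> * real n / (real j * ln (real n))"
  shows "norm (integral\<^sup>L (sample_space n) (T3 n b \<epsilon> dw I j))
           \<le> 11 * \<gamma> * real n / ln (real n) * norm dw"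
proof -
  note n = assms(1) and g = assms(2) and I = assms(3) and j = assms(4) and eps = assms(5) and card = assms(6)
  define a where "a = real j - 1/2"
  define Q where "Q = Qset n b I j"
  define M0 where "M0 = (std_gaussian :: (real^'p) measure) \<Otimes>\<^sub>M unif_eta"
  have M0p: "prob_space M0"
  proof -
    interpret G: prob_space "std_gaussian :: (real^'p) measure" by (rule G_prob)
    interpret U: prob_space unif_eta by (rule U_prob)
    interpret GU: pair_prob_space "std_gaussian :: (real^'p) measure" unif_eta by standard
    show ?thesis unfolding M0_def by (rule GU.P.prob_space_axioms)
  qed
  have Qsub: "Q \<subseteq> {..<n}" by (auto simp: Q_def Qset_def)
  have finQ: "finite Q" using Qsub finite_subset by blast
  have T3eq: "T3 n b \<epsilon> dw I j \<omega> = (\<Sum>i\<in>Q. hh (b i + \<epsilon> i) dw a I (\<omega> i))" for \<omega>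
    by (simp add: T3_def hh_def a_def Q_def)
  have SS: "sample_space n = PiM {..<n} (\<lambda>_. M0)" by (simp add: sample_space_def M0_def)
  have comp: "integrable (sample_space n) (\<lambda>\<omega>. hh (b i + \<epsilon> i) dw a I (\<omega> i)) \<and>
     integral\<^sup>L (sample_space n) (\<lambda>\<omega>. hh (b i + \<epsilon> i) dw a I (\<omega> i)) = integral\<^sup>L M0 (hh (b i + \<epsilon> i) dw a I)"
    if iQ: "i \<in> Q" for i
  proof -
    have iin: "i \<in> {..<n}" using iQ Qsub by blast
    have D: "distr (PiM {..<n} (\<lambda>_. M0)) M0 (\<lambda>\<omega>. \<omega> i) = M0"
      by (rule distr_PiM_component[OF M0p iin])
    have cm: "(\<lambda>\<omega>. \<omega> i) \<in> measurable (PiM {..<n} (\<lambda>_. M0)) M0"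
      by (rule measurable_component_singleton[OF iin])
    have hm: "hh (b i + \<epsilon> i) dw a I \<in> borel_measurable M0" unfolding M0_def by (rule hh_meas)
    have hi: "integrable M0 (hh (b i + \<epsilon> i) dw a I)" unfolding M0_def by (rule hh_int)
    have "integrable (distr (PiM {..<n} (\<lambda>_. M0)) M0 (\<lambda>\<omega>. \<omega> i)) (hh (b i + \<epsilon> i) dw a I)"
      using hi D by simp
    then have "integrable (PiM {..<n} (\<lambda>_. M0)) (\<lambda>\<omega>. hh (b i + \<epsilon> i) dw a I (\<omega> i))"
      by (simp add: integrable_distr_eq[OF cm hm])
    moreover have "integral\<^sup>L (PiM {..<n} (\<lambda>_. M0)) (\<lambda>\<omega>. hh (b i + \<epsilon> i) dw a I (\<omega> i)) = integral\<^sup>L M0 (hh (b i + \<epsilon> i) dw a I)"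
      using integral_distr[OF cm hm] D by simp
    ultimately show ?thesis by (simp add: SS)
  qed
  have "integral\<^sup>L (sample_space n) (T3 n b \<epsilon> dw I j) = integral\<^sup>L (sample_space n) (\<lambda>\<omega>. \<Sum>i\<in>Q. hh (b i + \<epsilon> i) dw a I (\<omega> i))"
  proof -
    have "T3 n b \<epsilon> dw I j = (\<lambda>\<omega>. \<Sum>i\<in>Q. hh (b i + \<epsilon> i) dw a I (\<omega> i))" by (rule ext) (rule T3eq)
    then show ?thesis by simp
  qed
  also have "\<dots> = (\<Sum>i\<in>Q. integral\<^sup>L M0 (hh (b i + \<epsilon> i) dw a I))"
    using comp by (simp add: integral_sum)
  finally have E: "integral\<^sup>L (sample_space n) (T3 n b \<epsilon> dw I j) = (\<Sum>i\<in>Q. integral\<^sup>L M0 (hh (b i + \<epsilon> i) dw a I))" .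
  have ci: "\<bar>b i + \<epsilon> i\<bar> \<le> real j * I" if iQ: "i \<in> Q" for i
  proof -
    have "\<bar>b i - (real j - 1/2) * I\<bar> \<le> 5/18 * I" using iQ by (simp add: Q_def Qset_def)
    moreover have "\<bar>\<epsilon> i\<bar> \<le> 2/9 * I" using eps iQ Qsub by auto
    moreover have "0 \<le> (real j - 1/2) * I" using j I by simp
    moreover have "(real j - 1/2) * I = real j * I - I/2" by (simp add: algebra_simps)
    moreover have "0 \<le> real j * I" using I by simp
    ultimately show ?thesis unfolding abs_le_iff by linarith
  qed
  have "norm (integral\<^sup>L (sample_space n) (T3 n b \<epsilon> dw I j)) \<le> (\<Sum>i\<in>Q. norm (integral\<^sup>L M0 (hh (b i + \<epsilon> i) dw a I)))"
    unfolding E by (rule norm_sum)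
  also have "\<dots> \<le> (\<Sum>i\<in>Q. 9 * real j * norm dw)"
  proof (rule sum_mono)
    fix i assume iQ: "i \<in> Q"
    have "norm (integral\<^sup>L M0 (hh (b i + \<epsilon> i) dw a I)) \<le> 9 * \<bar>b i + \<epsilon> i\<bar> / I * norm dw"
      unfolding M0_def by (rule hh_bound[OF I])
    also have "\<dots> \<le> 9 * real j * norm dw"
    proof -
      have "\<bar>b i + \<epsilon> i\<bar> / I \<le> real j" using ci[OF iQ] I by (simp add: divide_le_eq)
      then show ?thesis by (intro mult_right_mono) auto
    qed
    finally show "norm (integral\<^sup>L M0 (hh (b i + \<epsilon> i) dw a I)) \<le> 9 * real j * norm dw" .
  qed
  also have "\<dots> = real (card Q) * real j * 9 * norm dw" by simp
  also have "\<dots> \<le> \<gamma> * real n / ln (real n) * 9 * norm dw"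
  proof -
    have ln: "ln (real n) > 0" using n by simp
    have "real (card Q) * real j \<le> \<gamma> * real n / (real j * ln (real n)) * real j"
      using card j by (intro mult_right_mono) (simp_all add: Q_def)
    also have "\<dots> = \<gamma> * real n / ln (real n)" using j by simp
    finally show ?thesis by (intro mult_right_mono) simp_all
  qed
  also have "\<dots> \<le> 11 * \<gamma> * real n / ln (real n) * norm dw"
  proof -
    have X0: "0 \<le> \<gamma> * real n / ln (real n) * norm dw" using g n by simp
    have e1: "\<gamma> * real n / ln (real n) * 9 * norm dw = 9 * (\<gamma> * real n / ln (real n) * norm dw)" by (simp add: algebra_simps)
    have e2: "11 * \<gamma> * real n / ln (real n) * norm dw = 11 * (\<gamma> * real n / ln (real n) * norm dw)" by (simp add: algebra_simps)
    show ?thesis unfolding e1 e2 by (rule mult_right_mono[OF _ X0]) simp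
  qed
  finally show ?thesis .
qed


end
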